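(* Let $\varphi:\mathbb N\to(0,\infty)$ be nonincreasing with $\lim_{n\to\infty}\varphi(n)=0$ and $\lim_{n\to\infty}n\varphi(n)=\infty$. Then there exists a nondecreasing function $\xi:\mathbb N\to\mathbb N$ with $\lim_{n\to\infty}\xi(n)=\infty$ such that for all sufficiently large $n$, $\varphi(1)\le\xi(n)\,\varphi(n\xi(n))\le2\varphi(1)$. *)

theory Defs
  imports Complex_Main
begin

end

theory Submission
  imports Defs
begin

theorem lemma4p2:
  fixes \<phi> :: "nat \<Rightarrow> real"
  assumes pos: "\<And>n. n \<ge> 1 \<Longrightarrow> \<phi> n > 0"
    and noninc: "\<And>m n. 1 \<le> m \<Longrightarrow> m \<le> n \<Longrightarrow> \<phi> n \<le> \<phi> m"
    and lim0: "\<phi> \<longlonglongrightarrow> 0"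
    and liminf: "filterlim (\<lambda>n. real n * \<phi> n) at_top sequentially"
  shows "\<exists>\<xi> :: nat \<Rightarrow> nat.
           (\<forall>n. n \<ge> 1 \<longrightarrow> \<xi> n \<ge> 1)
         \<and> (\<forall>m n. 1 \<le> m \<longrightarrow> m \<le> n \<longrightarrow> \<xi> m \<le> \<xi> n)
         \<and> filterlim \<xi> at_top sequentially
         \<and> (\<forall>\<^sub>F n in sequentially.
               \<phi> 1 \<le> real (\<xi> n) * \<phi> (n * \<xi> n) \<and>
               real (\<xi> n) * \<phi> (n * \<xi> n) \<le> 2 * \<phi> 1)"
proof -
  define c where "c = \<phi> 1"
  have cpos: "c > 0" using pos[of 1] by (simp add: c_def)
  define P where "P n k \<longleftrightarrow> k \<ge> 1 \<and> c \<le> real k * \<phi> (n * k)" for n k :: nat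
  define \<xi> where "\<xi> n = (LEAST k. P n k)" for n
  have ex: "\<exists>k. P n k" if n1: "n \<ge> 1" for n
  proof -
    have "\<forall>\<^sub>F m in sequentially. c * real n \<le> real m * \<phi> m"
      using liminf by (simp add: filterlim_at_top)
    then obtain N where N: "\<And>m. m \<ge> N \<Longrightarrow> c * real n \<le> real m * \<phi> m"
      by (auto simp: eventually_sequentially)
    have "n * (N+1) \<ge> N" using n1 proof - have "N \<le> 1 * (N+1)" by simp also have "\<dots> \<le> n * (N+1)" using n1 by (rule mult_le_mono1) finally show ?thesis . qed
    hence "c * real n \<le> real (n*(N+1)) * \<phi> (n*(N+1))" by (rule N)
    hence "c * real n \<le> real n * (real (N+1) * \<phi> (n*(N+1)))" by (simp add: algebra_simps)
    hence "c \<le> real (N+1) * \<phi> (n*(N+1))" using n1 by (simp add: mult.commute[of c])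
    thus ?thesis unfolding P_def by (intro exI[of _ "N+1"]) auto
  qed
  have P\<xi>: "P n (\<xi> n)" if "n \<ge> 1" for n
    unfolding \<xi>_def using ex[OF that] by (rule LeastI_ex)
  have \<xi>le: "\<xi> n \<le> k" if "P n k" for n k
    unfolding \<xi>_def using that by (rule Least_le)
  have \<xi>1: "\<xi> n \<ge> 1" if "n \<ge> 1" for n using P\<xi>[OF that] by (simp add: P_def)
  have mono: "\<xi> m \<le> \<xi> n" if "1 \<le> m" "m \<le> n" for m n
  proof -
    have Pn: "P n (\<xi> n)" using P\<xi> that by simp
    hence k1: "\<xi> n \<ge> 1" and ck: "c \<le> real (\<xi> n) * \<phi> (n * \<xi> n)" by (auto simp: P_def)
    have "\<phi> (n * \<xi> n) \<le> \<phi> (m * \<xi> n)"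
      using that k1 by (intro noninc) auto
    hence "real (\<xi> n) * \<phi> (n * \<xi> n) \<le> real (\<xi> n) * \<phi> (m * \<xi> n)"
      by (intro mult_left_mono) auto
    hence "P m (\<xi> n)" using ck k1 unfolding P_def by linarith
    thus ?thesis by (rule \<xi>le)
  qed
  have lim: "filterlim \<xi> at_top sequentially"
    unfolding filterlim_at_top
  proof
    fix Z :: nat
    have "c / real (Z+1) > 0" using cpos by simp
    hence "\<forall>\<^sub>F n in sequentially. \<phi> n < c / real (Z+1)"
      by (rule order_tendstoD(2)[OF lim0])
    then obtain N where N: "\<And>n. n \<ge> N \<Longrightarrow> \<phi> n < c / real (Z+1)"
      by (auto simp: eventually_sequentially)
    show "\<forall>\<^sub>F n in sequentially. Z \<le> \<xi> n"
      unfolding eventually_sequentially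
    proof (intro exI[of _ "max N 1"] allI impI)
      fix n assume n: "max N 1 \<le> n"
      show "Z \<le> \<xi> n"
      proof (rule ccontr)
        assume "\<not> Z \<le> \<xi> n"
        hence kZ: "real (\<xi> n) \<le> real Z" by simp
        have Pn: "P n (\<xi> n)" using P\<xi> n by simp
        hence k1: "\<xi> n \<ge> 1" and ck: "c \<le> real (\<xi> n) * \<phi> (n * \<xi> n)" by (auto simp: P_def)
        have "\<phi> (n * \<xi> n) \<le> \<phi> n" using n k1 by (intro noninc) auto
        have p0: "\<phi> (n * \<xi> n) > 0" using n k1 by (intro pos) auto
        have "real (\<xi> n) * \<phi> (n * \<xi> n) \<le> real Z * \<phi> n"
          using kZ \<open>\<phi> (n * \<xi> n) \<le> \<phi> n\<close> p0
          by (intro mult_mono) auto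
        also have "\<dots> \<le> real Z * (c / real (Z+1))"
          using N[of n] n by (intro mult_left_mono) auto
        also have "\<dots> < c" using cpos by (simp add: field_simps)
        finally show False using ck by simp
      qed
    qed
  qed
  have bounds: "c \<le> real (\<xi> n) * \<phi> (n * \<xi> n) \<and> real (\<xi> n) * \<phi> (n * \<xi> n) \<le> 2 * c"
    if n1: "n \<ge> 1" for n
  proof -
    have Pn: "P n (\<xi> n)" using P\<xi> n1 by simp
    hence k1: "\<xi> n \<ge> 1" and ck: "c \<le> real (\<xi> n) * \<phi> (n * \<xi> n)" by (auto simp: P_def)
    have "real (\<xi> n) * \<phi> (n * \<xi> n) \<le> 2 * c"
    proof (cases "\<xi> n = 1")
      case True
      have "\<phi> n \<le> \<phi> 1" using n1 by (intro noninc) auto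
      thus ?thesis using True cpos by (simp add: c_def)
    next
      case False
      define j where "j = \<xi> n - 1"
      have j1: "j \<ge> 1" and kj: "\<xi> n = j + 1" using k1 False by (auto simp: j_def)
      have "\<not> P n j" unfolding \<xi>_def j_def
        by (rule not_less_Least) (use k1 in \<open>auto simp: \<xi>_def\<close>)
      hence lt: "real j * \<phi> (n * j) < c" using j1 by (auto simp: P_def)
      have "\<phi> (n * \<xi> n) \<le> \<phi> (n * j)" using n1 j1 kj by (intro noninc) auto
      have p0: "\<phi> (n * \<xi> n) > 0" using n1 k1 by (intro pos) auto
      have "real (\<xi> n) * \<phi> (n * \<xi> n) \<le> (2 * real j) * \<phi> (n * j)"
        using \<open>\<phi> (n * \<xi> n) \<le> \<phi> (n * j)\<close> p0 j1 kj by (intro mult_mono) auto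
      also have "\<dots> < 2 * c" using lt by simp
      finally show ?thesis by simp
    qed
    with ck show ?thesis by simp
  qed
  show ?thesis
    apply (rule exI[of _ \<xi>])
    using \<xi>1 mono lim bounds
    by (auto simp: c_def eventually_sequentially intro!: exI[of _ 1])
qed

end
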